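(* For every $\pi\in B_n$, $\ell_B(\pi)\equiv\ell_B(dp(\pi))\pmod 2$.
   Context: $B_n$ is the set of words $\pi=\pi_1\cdots\pi_n$ with $\pi_i\in\{\pm1,\dots,\pm n\}$ and $|\pi_1|\cdots|\pi_n|$ a permutation of $[n]$. $\mathrm{inv}(\pi)=\#\{(i,j):i<j,\pi_i>\pi_j\}$ (usual order), $\ell_B(\pi)=\mathrm{inv}(\pi)-\sum_{i:\pi_i<0}\pi_i$ (equal to $0$ for the empty word). For a word of nonzero integers with distinct absolute values $a_1<\dots<a_m$, its reduction replaces each letter $\pm a_j$ by $\pm j$. $dp(\pi)$ is the reduction of the subword of letters $\pi_i$ with $\pi_i\ne i$. *)

theory Defs
  imports Main
begin

definition signed_perms :: "nat \<Rightarrow> int list set" where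
  "signed_perms n = {w. length w = n \<and> distinct (map abs w) \<and> set (map abs w) = {1..int n}}"

definition inv :: "int list \<Rightarrow> nat" where
  "inv w = card {(i, j). i < j \<and> j < length w \<and> w ! i > w ! j}"

definition ellB :: "int list \<Rightarrow> int" where
  "ellB w = int (inv w) - (\<Sum>i\<in>{i. i < length w \<and> w ! i < 0}. w ! i)"

text \<open>Reduction: replace the letter +-a_j by +-j, where a_1 < ... < a_m are the
  absolute values of the letters.\<close>
definition reduction :: "int list \<Rightarrow> int list" where
  "reduction w = map (\<lambda>x. sgn x * int (card {y \<in> set (map abs w). y \<le> \<bar>x\<bar>})) w"

definition dp :: "int list \<Rightarrow> int list" where
  "dp w = reduction (map fst (filter (\<lambda>(x, i). x \<noteq> int i) (zip w [1..<length w + 1])))"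

end

theory Submission
  imports Defs
begin

definition negs :: "int list \<Rightarrow> nat" where
  "negs v = length (filter (\<lambda>x. x < 0) v)"

lemma inv_Nil: "inv [] = 0" by (simp add: inv_def)

lemma inv_Cons: "inv (x#xs) = length (filter (\<lambda>y. x > y) xs) + inv xs"
proof -
  let ?S = "{(i, j). i < j \<and> j < length (x#xs) \<and> (x#xs) ! i > (x#xs) ! j}"
  let ?T = "{(i, j). i < j \<and> j < length xs \<and> xs ! i > xs ! j}"
  let ?J = "{j. j < length xs \<and> x > xs ! j}"
  have eq: "?S = (\<lambda>j. (0::nat, Suc j)) ` ?J \<union> (\<lambda>(i,j). (Suc i, Suc j)) ` ?T"
  proof (rule set_eqI, rule iffI)
    fix p assume "p \<in> ?S"
    then obtain i j where p: "p = (i,j)" "i<j" "j < Suc (length xs)" "(x#xs)!i > (x#xs)!j" by auto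
    then obtain j' where j: "j = Suc j'" by (cases j) auto
    show "p \<in> (\<lambda>j. (0::nat, Suc j)) ` ?J \<union> (\<lambda>(i,j). (Suc i, Suc j)) ` ?T"
    proof (cases i)
      case 0 then show ?thesis using p j by auto
    next
      case (Suc i') then have "(i',j') \<in> ?T" using p j by auto
      then show ?thesis using p j Suc by force
    qed
  next
    fix p assume "p \<in> (\<lambda>j. (0::nat, Suc j)) ` ?J \<union> (\<lambda>(i,j). (Suc i, Suc j)) ` ?T"
    then show "p \<in> ?S" by auto
  qed
  have fin: "finite ?T" by (rule finite_subset[of _ "{..<length xs} \<times> {..<length xs}"]) auto
  have finJ: "finite ?J" by auto
  have "card ?S = card ((\<lambda>j. (0::nat, Suc j)) ` ?J) + card ((\<lambda>(i,j). (Suc i, Suc j)) ` ?T)"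
    unfolding eq using fin finJ by (intro card_Un_disjoint) auto
  also have "card ((\<lambda>j. (0::nat, Suc j)) ` ?J) = card ?J" by (rule card_image) (auto simp: inj_on_def)
  also have "card ((\<lambda>(i,j). (Suc i, Suc j)) ` ?T) = card ?T" by (rule card_image) (auto simp: inj_on_def)
  also have "card ?J = length (filter (\<lambda>y. x > y) xs)" by (simp add: length_filter_conv_card)
  finally show ?thesis by (simp add: inv_def)
qed

lemma inv_mid: "inv (xs @ x # ys) = inv (xs @ ys) + length (filter (\<lambda>a. a > x) xs) + length (filter (\<lambda>b. x > b) ys)"
  by (induction xs) (auto simp: inv_Cons)

lemma mono_iff:
  fixes f :: "int \<Rightarrow> int"
  assumes "\<forall>a\<in>S. \<forall>b\<in>S. a < b \<longrightarrow> f a < f b" "a \<in> S" "b \<in> S"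
  shows "(f a < f b) = (a < b)"
proof -
  consider "a < b" | "a = b" | "b < a" by linarith
  then show ?thesis using assms by cases force+
qed

lemma inv_map_mono:
  fixes f :: "int \<Rightarrow> int"
  assumes "\<forall>a\<in>set L. \<forall>b\<in>set L. a < b \<longrightarrow> f a < f b"
  shows "inv (map f L) = inv L"
  using assms
proof (induction L)
  case Nil then show ?case by simp
next
  case (Cons x L)
  have h: "\<forall>a\<in>set L. \<forall>b\<in>set L. a<b \<longrightarrow> f a < f b" using Cons.prems by auto
  have e: "filter (\<lambda>y. f y < f x) L = filter (\<lambda>y. y<x) L"
    by (rule filter_cong) (use mono_iff[OF Cons.prems] in auto)
  have "filter (\<lambda>z. z < f x) (map f L) = map f (filter (\<lambda>y. f y < f x) L)"
    by (simp add: filter_map comp_def)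
  then have "filter (\<lambda>z. z < f x) (map f L) = map f (filter (\<lambda>y. y<x) L)"
    using e by simp
  then show ?case using Cons h by (simp add: inv_Cons)
qed

definition hh :: "int \<Rightarrow> int \<Rightarrow> bool" where
  "hh x y \<longleftrightarrow> (x < 0 \<and> \<bar>y\<bar> < \<bar>x\<bar>) \<or> (y < 0 \<and> \<bar>x\<bar> < \<bar>y\<bar>)"

fun DD :: "int list \<Rightarrow> nat" where
  "DD [] = 0"
| "DD (x#xs) = length (filter (hh x) xs) + DD xs"

lemma pw:
  assumes "x \<noteq> 0" "y \<noteq> 0" "\<bar>y\<bar> \<noteq> \<bar>x\<bar>"
  shows "(of_bool (y < x) + of_bool (\<bar>y\<bar> < \<bar>x\<bar>)) mod 2 = (of_bool (hh x y) :: nat) mod 2"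
  using assms by (cases "x < 0"; cases "y < 0") (auto simp: hh_def)

lemma sum_par:
  assumes "\<forall>y\<in>set xs. (of_bool (p y) + of_bool (q y)) mod 2 = (of_bool (r y) :: nat) mod 2"
  shows "(length (filter p xs) + length (filter q xs)) mod 2 = length (filter r xs) mod 2"
  using assms
proof (induction xs)
  case Nil then show ?case by simp
next
  case (Cons y xs)
  have e1: "length (filter p (y#xs)) + length (filter q (y#xs)) = (of_bool (p y) + of_bool (q y)) + (length (filter p xs) + length (filter q xs))" by simp
  have e2: "length (filter r (y#xs)) = of_bool (r y) + length (filter r xs)" by simp
  have "(length (filter p xs) + length (filter q xs)) mod 2 = length (filter r xs) mod 2" using Cons by auto
  moreover have "(of_bool (p y) + of_bool (q y)) mod 2 = (of_bool (r y) :: nat) mod 2" using Cons.prems by auto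
  ultimately show ?case unfolding e1 e2 by (rule mod_add_cong[rotated])
qed

lemma step_par:
  assumes "x \<noteq> 0" "\<forall>y\<in>set xs. y \<noteq> 0 \<and> \<bar>y\<bar> \<noteq> \<bar>x\<bar>"
  shows "(length (filter (\<lambda>y. y < x) xs) + length (filter (\<lambda>b. b < \<bar>x\<bar>) (map abs xs))) mod 2
         = length (filter (hh x) xs) mod 2"
proof -
  have "filter (\<lambda>b. b < \<bar>x\<bar>) (map abs xs) = map abs (filter (\<lambda>y. \<bar>y\<bar> < \<bar>x\<bar>) xs)"
    by (simp add: filter_map comp_def)
  then have "length (filter (\<lambda>b. b < \<bar>x\<bar>) (map abs xs)) = length (filter (\<lambda>y. \<bar>y\<bar> < \<bar>x\<bar>) xs)" by simp
  moreover have "(length (filter (\<lambda>y. y < x) xs) + length (filter (\<lambda>y. \<bar>y\<bar> < \<bar>x\<bar>) xs)) mod 2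
         = length (filter (hh x) xs) mod 2"
    by (rule sum_par) (use assms pw in auto)
  ultimately show ?thesis by simp
qed

lemma A1:
  assumes "\<forall>x\<in>set v. x \<noteq> 0" "distinct (map abs v)"
  shows "(inv v + inv (map abs v)) mod 2 = DD v mod 2"
  using assms
proof (induction v)
  case Nil then show ?case by (simp add: inv_Nil)
next
  case (Cons x xs)
  have s: "(length (filter (\<lambda>y. y < x) xs) + length (filter (\<lambda>b. b < \<bar>x\<bar>) (map abs xs))) mod 2
         = length (filter (hh x) xs) mod 2"
    by (rule step_par) (use Cons.prems in \<open>auto simp: rev_image_eqI\<close>)
  have IH: "(inv xs + inv (map abs xs)) mod 2 = DD xs mod 2" using Cons by auto
  have e: "inv (x#xs) + inv (map abs (x#xs)) = (length (filter (\<lambda>y. y < x) xs) + length (filter (\<lambda>b. b < \<bar>x\<bar>) (map abs xs))) + (inv xs + inv (map abs xs))"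
    by (simp add: inv_Cons)
  show ?case unfolding e DD.simps by (rule mod_add_cong[OF s IH])
qed

definition FF :: "int list \<Rightarrow> int list \<Rightarrow> nat" where
  "FF u v = sum_list (map (\<lambda>x. if x < 0 then length (filter (\<lambda>y. \<bar>y\<bar> < \<bar>x\<bar>) v) else 0) u)"

lemma FF_Cons2: "FF u (x#v) = FF u v + length (filter (\<lambda>y. y < 0 \<and> \<bar>x\<bar> < \<bar>y\<bar>) u)"
  by (induction u) (auto simp: FF_def)

lemma hh_split: "length (filter (hh x) xs) = (if x < 0 then length (filter (\<lambda>y. \<bar>y\<bar> < \<bar>x\<bar>) xs) else 0)
   + length (filter (\<lambda>y. y < 0 \<and> \<bar>x\<bar> < \<bar>y\<bar>) xs)"
  by (induction xs) (auto simp: hh_def)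

lemma A2: "DD v = FF v v"
proof (induction v)
  case Nil then show ?case by (simp add: FF_def)
next
  case (Cons x xs)
  have "FF (x#xs) (x#xs) = (if x < 0 then length (filter (\<lambda>y. \<bar>y\<bar> < \<bar>x\<bar>) xs) else 0) + FF xs (x#xs)"
    by (simp add: FF_def)
  then show ?case using Cons by (simp add: FF_Cons2 hh_split)
qed

lemma negsum:
  assumes "\<forall>x\<in>set u. x < 0 \<longrightarrow> - x = int (length (filter (\<lambda>y. \<bar>y\<bar> < \<bar>x\<bar>) v)) + 1"
  shows "sum_list (map (\<lambda>x. if x < 0 then x else 0) u) = - (int (FF u v) + int (negs u))"
  using assms
proof (induction u)
  case Nil then show ?case by (simp add: FF_def negs_def)
next
  case (Cons x u)
  have pu: "\<forall>x\<in>set u. x < 0 \<longrightarrow> - x = int (length (filter (\<lambda>y. \<bar>y\<bar> < \<bar>x\<bar>) v)) + 1"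
    using Cons.prems by (meson list.set_intros(2))
  have IH: "sum_list (map (\<lambda>x. if x < 0 then x else 0) u) = - (int (FF u v) + int (negs u))"
    by (rule Cons.IH[OF pu])
  have F: "FF (x#u) v = (if x < 0 then length (filter (\<lambda>y. \<bar>y\<bar> < \<bar>x\<bar>) v) else 0) + FF u v"
    by (simp add: FF_def)
  have N: "negs (x#u) = (if x < 0 then 1 else 0) + negs u" by (simp add: negs_def)
  show ?case
  proof (cases "x < 0")
    case True
    have hx: "- x = int (length (filter (\<lambda>y. \<bar>y\<bar> < \<bar>x\<bar>) v)) + 1" using Cons.prems True by (meson list.set_intros(1))
    have s1: "sum_list (map (\<lambda>x. if x < 0 then x else 0) (x#u)) = x + sum_list (map (\<lambda>x. if x < 0 then x else 0) u)"
      using True by simp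
    have f1: "int (FF (x#u) v) = int (length (filter (\<lambda>y. \<bar>y\<bar> < \<bar>x\<bar>) v)) + int (FF u v)"
      using F True by simp
    have n1: "int (negs (x#u)) = 1 + int (negs u)" using N True by simp
    show ?thesis using hx s1 f1 n1 IH by linarith
  next
    case False
    then show ?thesis using IH F N by simp
  qed
qed

lemma ellB_sum: "ellB v = int (inv v) - sum_list (map (\<lambda>x. if x < 0 then x else 0) v)"
proof -
  have "(\<Sum>i\<in>{i. i < length v \<and> v ! i < 0}. v ! i) = (\<Sum>i\<in>{i\<in>{..<length v}. v ! i < 0}. v ! i)"
    by (rule sum.cong) auto
  also have "\<dots> = (\<Sum>i<length v. if v ! i < 0 then v ! i else 0)"
    by (rule sum.inter_filter) simp
  also have "\<dots> = sum_list (map (\<lambda>x. if x < 0 then x else 0) v)"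
    by (simp add: sum_list_sum_nth atLeast0LessThan)
  finally show ?thesis by (simp add: ellB_def)
qed

lemma partA:
  assumes "\<forall>x\<in>set v. x \<noteq> 0" "distinct (map abs v)"
    "\<forall>x\<in>set v. int (length (filter (\<lambda>y. \<bar>y\<bar> < \<bar>x\<bar>) v)) = \<bar>x\<bar> - 1"
  shows "ellB v mod 2 = (int (inv (map abs v)) + int (negs v)) mod 2"
proof -
  have "\<forall>x\<in>set v. x < 0 \<longrightarrow> - x = int (length (filter (\<lambda>y. \<bar>y\<bar> < \<bar>x\<bar>) v)) + 1"
    using assms(3) by auto
  from negsum[OF this] have E: "ellB v = int (inv v) + int (DD v) + int (negs v)"
    by (simp add: ellB_sum A2)
  have "(inv v + inv (map abs v)) mod 2 = DD v mod 2" using A1 assms by blast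
  then have "int (DD v) mod 2 = (int (inv v) + int (inv (map abs v))) mod 2"
    by (metis of_nat_add of_nat_mod of_nat_numeral)
  then have "(int (inv v) + int (DD v) + int (negs v)) mod 2 = (int (inv v) + (int (inv v) + int (inv (map abs v))) + int (negs v)) mod 2"
    by (metis mod_add_cong)
  also have "\<dots> = (2 * int (inv v) + (int (inv (map abs v)) + int (negs v))) mod 2" by (simp add: algebra_simps)
  also have "\<dots> = (int (inv (map abs v)) + int (negs v)) mod 2" by simp
  finally show ?thesis using E by simp
qed

lemma len_filter_card: "distinct xs \<Longrightarrow> length (filter P xs) = card {x\<in>set xs. P x}"
  by (metis distinct_card distinct_filter set_filter)

definition valid :: "(int \<times> int) list \<Rightarrow> bool" where
  "valid P \<longleftrightarrow> distinct (map (abs \<circ> fst) P) \<and> sorted_wrt (<) (map snd P)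
      \<and> set (map (abs \<circ> fst) P) = set (map snd P)"

lemma remove_fixed:
  assumes "valid (A @ (k,k) # B)"
  shows "valid (A @ B) \<and> inv (map (abs\<circ>fst) (A @ (k,k) # B)) mod 2 = inv (map (abs\<circ>fst) (A @ B)) mod 2"
proof -
  let ?aA = "map (abs\<circ>fst) A" let ?aB = "map (abs\<circ>fst) B"
  let ?pA = "map snd A" let ?pB = "map snd B"
  have d: "distinct (?aA @ \<bar>k\<bar> # ?aB)" and s: "sorted_wrt (<) (?pA @ k # ?pB)"
    and e: "set (?aA @ \<bar>k\<bar> # ?aB) = set (?pA @ k # ?pB)"
    using assms by (auto simp: valid_def)
  have "k \<in> set (?aA @ \<bar>k\<bar> # ?aB)" using e by simp
  then have k0: "k \<ge> 0" by auto
  then have ak: "\<bar>k\<bar> = k" by simp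
  have dp: "distinct (?pA @ k # ?pB)" using s by (simp add: strict_sorted_iff)
  have posA: "\<forall>p\<in>set ?pA. p < k" and posB: "\<forall>p\<in>set ?pB. k < p"
    using s by (auto simp: sorted_wrt_append)
  have kA: "k \<notin> set ?aA" and kB: "k \<notin> set ?aB" using d ak by auto
  have kpA: "k \<notin> set ?pA" and kpB: "k \<notin> set ?pB" using dp by auto
  have v: "valid (A @ B)"
  proof -
    have "distinct (map (abs\<circ>fst) (A @ B))" using d by simp
    moreover have "sorted_wrt (<) (map snd (A @ B))" using s by (simp add: sorted_wrt_append)
    moreover have "set (map (abs\<circ>fst) (A @ B)) = set (map snd (A @ B))"
      using e kA kB kpA kpB ak by auto
    ultimately show ?thesis by (simp add: valid_def)
  qed
  have "length (filter (\<lambda>a. a < k) (?aA @ k # ?aB)) = card {a\<in>set (?aA @ k # ?aB). a < k}"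
    using d ak by (intro len_filter_card) simp
  also have "\<dots> = card {a\<in>set (?pA @ k # ?pB). a < k}" using e ak by simp
  also have "\<dots> = length (filter (\<lambda>a. a < k) (?pA @ k # ?pB))"
    using dp by (intro len_filter_card[symmetric])
  also have "\<dots> = length A"
  proof -
    have "filter (\<lambda>a. a < k) ?pA = ?pA" using posA by (simp add: filter_True)
    moreover have "filter (\<lambda>a. a < k) ?pB = []" using posB by (auto simp: filter_empty_conv)
    ultimately show ?thesis by simp
  qed
  finally have c1: "length (filter (\<lambda>a. a < k) ?aA) + length (filter (\<lambda>a. a < k) ?aB) = length A" by simp
  have "length (filter (\<lambda>a. a < k) ?aA) + length (filter (\<lambda>a. \<not> a < k) ?aA) = length ?aA"
    by (rule sum_length_filter_compl)
  moreover have "filter (\<lambda>a. \<not> a < k) ?aA = filter (\<lambda>a. k < a) ?aA"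
  proof (rule filter_cong)
    fix a assume "a \<in> set ?aA"
    then have "a \<noteq> k" using kA by blast
    then show "(\<not> a < k) = (k < a)" by auto
  qed simp
  ultimately have c2: "length (filter (\<lambda>a. a < k) ?aA) + length (filter (\<lambda>a. k < a) ?aA) = length A" by simp
  have "inv (map (abs\<circ>fst) (A @ (k,k) # B)) = inv (?aA @ k # ?aB)" using ak by simp
  also have "\<dots> = inv (?aA @ ?aB) + length (filter (\<lambda>a. a > k) ?aA) + length (filter (\<lambda>b. k > b) ?aB)"
    by (rule inv_mid)
  also have "\<dots> = inv (map (abs\<circ>fst) (A @ B)) + 2 * length (filter (\<lambda>a. k < a) ?aA)"
    using c1 c2 by simp
  finally show ?thesis using v by simp
qed

lemma filter_fixed:
  "valid P \<Longrightarrow> inv (map (abs\<circ>fst) (filter (\<lambda>(x,j). x \<noteq> j) P)) mod 2 = inv (map (abs\<circ>fst) P) mod 2"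
proof (induction "length P" arbitrary: P rule: less_induct)
  case less
  show ?case
  proof (cases "\<exists>p\<in>set P. fst p = snd p")
    case False
    then have "filter (\<lambda>(x,j). x \<noteq> j) P = P" by (auto intro!: filter_True)
    then show ?thesis by simp
  next
    case True
    then obtain k where "(k,k) \<in> set P" by (metis prod.collapse)
    then obtain A B where P: "P = A @ (k,k) # B" by (meson split_list)
    have r: "valid (A @ B) \<and> inv (map (abs\<circ>fst) P) mod 2 = inv (map (abs\<circ>fst) (A @ B)) mod 2"
      using remove_fixed less.prems P by blast
    have f: "filter (\<lambda>(x,j). x \<noteq> j) P = filter (\<lambda>(x,j). x \<noteq> j) (A @ B)" using P by simp
    have "length (A @ B) < length P" using P by simp
    then have "inv (map (abs\<circ>fst) (filter (\<lambda>(x,j). x \<noteq> j) (A @ B))) mod 2 = inv (map (abs\<circ>fst) (A @ B)) mod 2"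
      using less.hyps r by blast
    then show ?thesis using f r by simp
  qed
qed

lemma negs_filter:
  "\<forall>(x,j)\<in>set P. j > 0 \<Longrightarrow> negs (map fst (filter (\<lambda>(x,j). x \<noteq> j) P)) = negs (map fst P)"
  by (induction P) (auto simp: negs_def)

lemma reduction_props:
  fixes u :: "int list"
  assumes nz: "\<forall>x\<in>set u. x \<noteq> 0" and d: "distinct (map abs u)"
  shows "inv (map abs (reduction u)) = inv (map abs u) \<and> negs (reduction u) = negs u
    \<and> (\<forall>x\<in>set (reduction u). x \<noteq> 0) \<and> distinct (map abs (reduction u))
    \<and> (\<forall>x\<in>set (reduction u). int (length (filter (\<lambda>y. \<bar>y\<bar> < \<bar>x\<bar>) (reduction u))) = \<bar>x\<bar> - 1)"
proof -
  define S where "S = set (map abs u)"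
  define rk where "rk a = int (card {y\<in>S. y \<le> a})" for a
  have red: "reduction u = map (\<lambda>x. sgn x * rk \<bar>x\<bar>) u" by (simp add: reduction_def rk_def S_def)
  have finS: "finite S" by (simp add: S_def)
  have inS: "x \<in> set u \<Longrightarrow> \<bar>x\<bar> \<in> S" for x by (simp add: S_def)
  have rkpos: "rk a \<ge> 1" if "a \<in> S" for a
  proof -
    have "{y\<in>S. y \<le> a} \<noteq> {}" using that by auto
    then have "card {y\<in>S. y \<le> a} > 0" using finS by (simp add: card_gt_0_iff)
    then show ?thesis by (simp add: rk_def)
  qed
  have rkmono: "\<forall>a\<in>S. \<forall>b\<in>S. a < b \<longrightarrow> rk a < rk b"
  proof (intro ballI impI)
    fix a b assume ab: "a \<in> S" "b \<in> S" "a < b"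
    have "b \<in> {y\<in>S. y \<le> b}" "b \<notin> {y\<in>S. y \<le> a}" using ab by auto
    moreover have "{y\<in>S. y \<le> a} \<subseteq> {y\<in>S. y \<le> b}" using ab by auto
    ultimately have "{y\<in>S. y \<le> a} \<subset> {y\<in>S. y \<le> b}" by blast
    then have "card {y\<in>S. y \<le> a} < card {y\<in>S. y \<le> b}" using finS by (intro psubset_card_mono) auto
    then show "rk a < rk b" by (simp add: rk_def)
  qed
  have rkcnt: "int (length (filter (\<lambda>y. \<bar>y\<bar> < \<bar>x\<bar>) u)) = rk \<bar>x\<bar> - 1" if x: "x \<in> set u" for x
  proof -
    have "filter (\<lambda>a. a < \<bar>x\<bar>) (map abs u) = map abs (filter (\<lambda>y. \<bar>y\<bar> < \<bar>x\<bar>) u)"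
      by (simp add: filter_map comp_def)
    then have "length (filter (\<lambda>y. \<bar>y\<bar> < \<bar>x\<bar>) u) = length (filter (\<lambda>a. a < \<bar>x\<bar>) (map abs u))" by simp
    also have "\<dots> = card {a\<in>S. a < \<bar>x\<bar>}" unfolding S_def by (rule len_filter_card[OF d])
    finally have 1: "length (filter (\<lambda>y. \<bar>y\<bar> < \<bar>x\<bar>) u) = card {a\<in>S. a < \<bar>x\<bar>}" .
    have "{y\<in>S. y \<le> \<bar>x\<bar>} = insert \<bar>x\<bar> {a\<in>S. a < \<bar>x\<bar>}" using inS[OF x] by auto
    then have "card {y\<in>S. y \<le> \<bar>x\<bar>} = Suc (card {a\<in>S. a < \<bar>x\<bar>})" using finS by simp
    then show ?thesis using 1 by (simp add: rk_def)
  qed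
  have absr: "\<bar>sgn x * rk \<bar>x\<bar>\<bar> = rk \<bar>x\<bar>" if x: "x \<in> set u" for x
    using nz x rkpos[OF inS[OF x]] by (auto simp: abs_mult sgn_if)
  have negr: "(sgn x * rk \<bar>x\<bar> < 0) = (x < 0)" if x: "x \<in> set u" for x
    using nz x rkpos[OF inS[OF x]] by (auto simp: sgn_if)
  have mabs: "map abs (reduction u) = map rk (map abs u)"
    unfolding red by (simp add: absr)
  have setS: "set (map abs u) = S" by (simp add: S_def)
  have c1: "inv (map abs (reduction u)) = inv (map abs u)"
    unfolding mabs by (rule inv_map_mono) (use rkmono setS in simp)
  have "filter (\<lambda>z. z < 0) (reduction u) = map (\<lambda>x. sgn x * rk \<bar>x\<bar>) (filter (\<lambda>x. sgn x * rk \<bar>x\<bar> < 0) u)"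
    unfolding red by (simp add: filter_map comp_def)
  also have "filter (\<lambda>x. sgn x * rk \<bar>x\<bar> < 0) u = filter (\<lambda>x. x < 0) u"
    by (rule filter_cong) (use negr in auto)
  finally have c2: "negs (reduction u) = negs u" by (simp add: negs_def)
  have c3: "\<forall>x\<in>set (reduction u). x \<noteq> 0"
  proof
    fix z assume "z \<in> set (reduction u)"
    then obtain x where x: "x \<in> set u" "z = sgn x * rk \<bar>x\<bar>" unfolding red by auto
    then have "\<bar>z\<bar> \<ge> 1" using absr rkpos inS by simp
    then show "z \<noteq> 0" by auto
  qed
  have injrk: "inj_on rk S"
  proof (rule inj_onI)
    fix a b assume ab: "a \<in> S" "b \<in> S" "rk a = rk b"
    show "a = b"
    proof (rule ccontr)
      assume "a \<noteq> b"
      then consider "a < b" | "b < a" by linarith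
      then show False using ab rkmono by cases force+
    qed
  qed
  have c4: "distinct (map abs (reduction u))"
    unfolding mabs using d injrk setS by (simp add: distinct_map comp_inj_on)
  have c5: "\<forall>z\<in>set (reduction u). int (length (filter (\<lambda>y. \<bar>y\<bar> < \<bar>z\<bar>) (reduction u))) = \<bar>z\<bar> - 1"
  proof
    fix z assume "z \<in> set (reduction u)"
    then obtain x where x: "x \<in> set u" and z: "z = sgn x * rk \<bar>x\<bar>" unfolding red by auto
    have "filter (\<lambda>y. \<bar>y\<bar> < \<bar>z\<bar>) (reduction u) = map (\<lambda>x. sgn x * rk \<bar>x\<bar>) (filter (\<lambda>y. \<bar>sgn y * rk \<bar>y\<bar>\<bar> < \<bar>z\<bar>) u)"
      unfolding red by (simp add: filter_map comp_def)
    also have "filter (\<lambda>y. \<bar>sgn y * rk \<bar>y\<bar>\<bar> < \<bar>z\<bar>) u = filter (\<lambda>y. \<bar>y\<bar> < \<bar>x\<bar>) u"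
    proof (rule filter_cong)
      fix y assume y: "y \<in> set u"
      have "(\<bar>sgn y * rk \<bar>y\<bar>\<bar> < \<bar>z\<bar>) = (rk \<bar>y\<bar> < rk \<bar>x\<bar>)" using absr[OF y] absr[OF x] z by simp
      also have "\<dots> = (\<bar>y\<bar> < \<bar>x\<bar>)" by (rule mono_iff[OF rkmono inS[OF y] inS[OF x]])
      finally show "(\<bar>sgn y * rk \<bar>y\<bar>\<bar> < \<bar>z\<bar>) = (\<bar>y\<bar> < \<bar>x\<bar>)" .
    qed simp
    finally have "length (filter (\<lambda>y. \<bar>y\<bar> < \<bar>z\<bar>) (reduction u)) = length (filter (\<lambda>y. \<bar>y\<bar> < \<bar>x\<bar>) u)" by simp
    then show "int (length (filter (\<lambda>y. \<bar>y\<bar> < \<bar>z\<bar>) (reduction u))) = \<bar>z\<bar> - 1"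
      using rkcnt[OF x] absr[OF x] z by simp
  qed
  show ?thesis using c1 c2 c3 c4 c5 by blast
qed

lemma int_img: "int ` {1..<n+1} = {1..int n}"
proof
  show "int ` {1..<n+1} \<subseteq> {1..int n}" by auto
  show "{1..int n} \<subseteq> int ` {1..<n+1}"
  proof
    fix x assume x: "x \<in> {1..int n}"
    then have "x = int (nat x)" "nat x \<in> {1..<n+1}" by auto
    then show "x \<in> int ` {1..<n+1}" by blast
  qed
qed

theorem mainTheorem10:
  fixes n :: nat and w :: "int list"
  assumes "w \<in> signed_perms n"
  shows "ellB w mod 2 = ellB (dp w) mod 2"
proof -
  have lw: "length w = n" and dw: "distinct (map abs w)" and sw: "set (map abs w) = {1..int n}"
    using assms by (auto simp: signed_perms_def)
  define P where "P = zip w (map int [1..<n+1])"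
  define u where "u = map fst (filter (\<lambda>(x,j). x \<noteq> j) P)"
  have dpw: "dp w = reduction u"
    unfolding dp_def u_def P_def lw by (simp add: zip_map2 filter_map comp_def split_def)
  have mf: "map fst P = w" using lw by (simp add: P_def)
  have ms: "map snd P = map int [1..<n+1]" using lw by (simp add: P_def)
  have vP: "valid P"
  proof -
    have "distinct (map (abs\<circ>fst) P)" using dw mf by (metis map_map)
    moreover have "sorted_wrt (<) (map snd P)" unfolding ms sorted_wrt_map by (simp del: upt_Suc)
    moreover have "set (map (abs\<circ>fst) P) = set (map snd P)"
      using sw mf ms int_img by (metis list.set_map map_map set_upt)
    ultimately show ?thesis by (simp add: valid_def)
  qed
  have pos: "\<forall>(x,j)\<in>set P. j > 0"
  proof
    fix p assume "p \<in> set P"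
    then have "snd p \<in> set (map snd P)" by simp
    then show "case p of (x,j) \<Rightarrow> j > 0" unfolding ms by (auto simp: split_def)
  qed
  have nzw: "\<forall>x\<in>set w. x \<noteq> 0"
  proof
    fix x assume "x \<in> set w"
    then have "\<bar>x\<bar> \<in> {1..int n}" using sw by (metis imageI list.set_map)
    then show "x \<noteq> 0" by auto
  qed
  have rw: "\<forall>x\<in>set w. int (length (filter (\<lambda>y. \<bar>y\<bar> < \<bar>x\<bar>) w)) = \<bar>x\<bar> - 1"
  proof
    fix x assume x: "x \<in> set w"
    then have ax: "\<bar>x\<bar> \<in> {1..int n}" using sw by (metis imageI list.set_map)
    have "filter (\<lambda>a. a < \<bar>x\<bar>) (map abs w) = map abs (filter (\<lambda>y. \<bar>y\<bar> < \<bar>x\<bar>) w)"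
      by (simp add: filter_map comp_def)
    then have "length (filter (\<lambda>y. \<bar>y\<bar> < \<bar>x\<bar>) w) = length (filter (\<lambda>a. a < \<bar>x\<bar>) (map abs w))" by simp
    also have "\<dots> = card {a\<in>{1..int n}. a < \<bar>x\<bar>}" using len_filter_card[OF dw] sw by simp
    also have "{a\<in>{1..int n}. a < \<bar>x\<bar>} = {1..<\<bar>x\<bar>}" using ax by auto
    finally show "int (length (filter (\<lambda>y. \<bar>y\<bar> < \<bar>x\<bar>) w)) = \<bar>x\<bar> - 1" using ax by auto
  qed
  have Aw: "ellB w mod 2 = (int (inv (map abs w)) + int (negs w)) mod 2"
    by (rule partA[OF nzw dw rw])
  have su: "set u \<subseteq> set w" unfolding u_def using mf by (auto simp: image_iff) (metis fst_conv)
  have nzu: "\<forall>x\<in>set u. x \<noteq> 0" using su nzw by blast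
  have mau: "map abs u = map (abs\<circ>fst) (filter (\<lambda>(x,j). x \<noteq> j) P)" by (simp add: u_def)
  have du: "distinct (map abs u)" unfolding mau
    by (rule distinct_map_filter) (use dw mf in \<open>metis map_map\<close>)
  have B1: "inv (map abs u) mod 2 = inv (map abs w) mod 2"
    using filter_fixed[OF vP] mau mf by (metis map_map)
  have B2: "negs u = negs w" using negs_filter[OF pos] mf by (simp add: u_def)
  have R: "inv (map abs (reduction u)) = inv (map abs u) \<and> negs (reduction u) = negs u
    \<and> (\<forall>x\<in>set (reduction u). x \<noteq> 0) \<and> distinct (map abs (reduction u))
    \<and> (\<forall>x\<in>set (reduction u). int (length (filter (\<lambda>y. \<bar>y\<bar> < \<bar>x\<bar>) (reduction u))) = \<bar>x\<bar> - 1)"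
    by (rule reduction_props[OF nzu du])
  have Ad: "ellB (dp w) mod 2 = (int (inv (map abs u)) + int (negs w)) mod 2"
    using partA[of "reduction u"] R B2 dpw by simp
  have "int (inv (map abs u)) mod 2 = int (inv (map abs w)) mod 2"
    using B1 by (metis of_nat_mod of_nat_numeral)
  then have "(int (inv (map abs u)) + int (negs w)) mod 2 = (int (inv (map abs w)) + int (negs w)) mod 2"
    by (metis mod_add_cong)
  then show ?thesis using Aw Ad by simp
qed

end
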